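(* Let $H=(V,f)$ be a separated labeled hypergraph with connected 1-skeleton. Suppose $H$ is 2-solvable (modulo some prime $p$), and that, for the corresponding red/blue 2-coloring, $H$ has a simple edge containing a different number of red vertices than blue vertices. Then $\mathcal A[H]\neq k[H]$.
   Context: Let $k$ be a field and $S=k[x_1,\dots,x_n,y]$. For an integral convex polytope $\mathcal P\subseteq\mathbb R^n_{\ge 0}$, the Ehrhart ring $\mathcal A[\mathcal P]$ is the $k$-subspace of $S$ spanned by the monomials $x^{\mathbf a}y^t$ with $t\in\mathbb N$, $\mathbf a\in t\mathcal P\cap\mathbb Z^n$; the polytopal ring is $k[\mathcal P]=k[x^{\mathbf a}y:\mathbf a\in\mathcal P\cap\mathbb Z^n]$. A labeled hypergraph $H=(V,f)$ on a finite set $V$ with alphabet $\{x_1,\dots,x_n\}$ is a function $f:\{x_1,\dots,x_n\}\to\mathcal P(V)$; its edges are the nonempty sets in the image of $f$. $H$ is separated if for all distinct $v,w\in V$ there are edges $F,G$ with $v\in F\setminus G$, $w\in G\setminus F$. For separated $H$, let $x^{\mathbf a_v}=\prod_{x:\,v\in f(x)}x$ for $v\in V$, $\mathcal P_H=\mathrm{conv}\{\mathbf a_v:v\in V\}$, $\mathcal A[H]=\mathcal A[\mathcal P_H]$, $k[H]=k[\mathcal P_H]$. An edge is simple if no other edge of $H$ is a proper subset of it. The 1-skeleton of $H$ is the simple graph on $V$ whose edges are the edges of $H$ with exactly two vertices. For a prime $p$, $H$ is 2-solvable modulo $p$ if there is a proper 2-coloring of the 1-skeleton of $H$ by colors red and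 blue (adjacent vertices get different colors, every vertex of $V$ colored) such that for every edge $E$ of $H$, and also for $E=V$, the numbers $r_E$ and $b_E$ of red and blue vertices in $E$ satisfy $r_E-b_E\equiv 0\pmod p$. $H$ is 2-solvable if it is 2-solvable modulo some prime $p$. *)

theory Defs
  imports "HOL-Analysis.Analysis" "HOL-Library.Poly_Mapping"
begin

(* Polynomial ring S = k[x_1..x_n, y]: the variables are indexed by 'x option,
   Some i = x_i (i ranges over the finite alphabet type 'x), None = y. *)

type_synonym ('x,'k) spoly = "('x option \<Rightarrow>\<^sub>0 nat) \<Rightarrow>\<^sub>0 'k"

definition expo :: "('x::finite \<Rightarrow> nat) \<Rightarrow> nat \<Rightarrow> ('x option \<Rightarrow>\<^sub>0 nat)" where
  "expo a t = Abs_poly_mapping (\<lambda>j. case j of None \<Rightarrow> t | Some i \<Rightarrow> a i)"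

definition monomial :: "('x::finite \<Rightarrow> nat) \<Rightarrow> nat \<Rightarrow> ('x,'k::field) spoly" where
  "monomial a t = Poly_Mapping.single (expo a t) 1"

inductive_set kspan :: "('m::comm_monoid_add \<Rightarrow>\<^sub>0 'k::field) set \<Rightarrow> ('m \<Rightarrow>\<^sub>0 'k) set"
  for G where
  kspan_zero: "0 \<in> kspan G"
| kspan_gen: "g \<in> G \<Longrightarrow> g \<in> kspan G"
| kspan_add: "p \<in> kspan G \<Longrightarrow> q \<in> kspan G \<Longrightarrow> p + q \<in> kspan G"
| kspan_smult: "p \<in> kspan G \<Longrightarrow> Poly_Mapping.single 0 c * p \<in> kspan G"

inductive_set kalg :: "('m::comm_monoid_add \<Rightarrow>\<^sub>0 'k::field) set \<Rightarrow> ('m \<Rightarrow>\<^sub>0 'k) set"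
  for G where
  kalg_one: "1 \<in> kalg G"
| kalg_gen: "g \<in> G \<Longrightarrow> g \<in> kalg G"
| kalg_add: "p \<in> kalg G \<Longrightarrow> q \<in> kalg G \<Longrightarrow> p + q \<in> kalg G"
| kalg_mult: "p \<in> kalg G \<Longrightarrow> q \<in> kalg G \<Longrightarrow> p * q \<in> kalg G"
| kalg_smult: "p \<in> kalg G \<Longrightarrow> Poly_Mapping.single 0 c * p \<in> kalg G"

definition rvec :: "('x::finite \<Rightarrow> nat) \<Rightarrow> real^'x" where
  "rvec a = (\<chi> i. real (a i))"

definition ehrhart_ring :: "(real^'x::finite) set \<Rightarrow> ('x,'k::field) spoly set" where
  "ehrhart_ring P = kspan {monomial a t | a t. rvec a \<in> (\<lambda>p. real t *\<^sub>R p) ` P}"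

definition polytopal_ring :: "(real^'x::finite) set \<Rightarrow> ('x,'k::field) spoly set" where
  "polytopal_ring P = kalg {monomial a 1 | a. rvec a \<in> P}"

definition labeled_hypergraph :: "'v set \<Rightarrow> ('x \<Rightarrow> 'v set) \<Rightarrow> bool" where
  "labeled_hypergraph V f \<longleftrightarrow> finite V \<and> (\<forall>x. f x \<subseteq> V)"

definition hedges :: "('x \<Rightarrow> 'v set) \<Rightarrow> 'v set set" where
  "hedges f = {E. E \<in> range f \<and> E \<noteq> {}}"

definition separated :: "'v set \<Rightarrow> ('x \<Rightarrow> 'v set) \<Rightarrow> bool" where
  "separated V f \<longleftrightarrow> (\<forall>v\<in>V. \<forall>w\<in>V. v \<noteq> w \<longrightarrow>
     (\<exists>F\<in>hedges f. \<exists>G\<in>hedges f. v \<in> F - G \<and> w \<in> G - F))"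

definition simple_edge :: "('x \<Rightarrow> 'v set) \<Rightarrow> 'v set \<Rightarrow> bool" where
  "simple_edge f E \<longleftrightarrow> E \<in> hedges f \<and> \<not> (\<exists>G\<in>hedges f. G \<subset> E)"

definition skel_adj :: "('x \<Rightarrow> 'v set) \<Rightarrow> 'v \<Rightarrow> 'v \<Rightarrow> bool" where
  "skel_adj f u w \<longleftrightarrow> {u, w} \<in> hedges f \<and> u \<noteq> w"

definition skel_connected :: "'v set \<Rightarrow> ('x \<Rightarrow> 'v set) \<Rightarrow> bool" where
  "skel_connected V f \<longleftrightarrow>
     (\<forall>u\<in>V. \<forall>w\<in>V. (u, w) \<in> {(a, b). skel_adj f a b}\<^sup>*)"

definition num_red :: "('v \<Rightarrow> bool) \<Rightarrow> 'v set \<Rightarrow> int" where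
  "num_red red E = int (card {v\<in>E. red v})"

definition num_blue :: "('v \<Rightarrow> bool) \<Rightarrow> 'v set \<Rightarrow> int" where
  "num_blue red E = int (card {v\<in>E. \<not> red v})"

definition two_solving_coloring :: "'v set \<Rightarrow> ('x \<Rightarrow> 'v set) \<Rightarrow> nat \<Rightarrow> ('v \<Rightarrow> bool) \<Rightarrow> bool" where
  "two_solving_coloring V f p red \<longleftrightarrow>
     (\<forall>u w. skel_adj f u w \<longrightarrow> red u \<noteq> red w) \<and>
     (\<forall>E \<in> insert V (hedges f). (num_red red E - num_blue red E) mod int p = 0)"

definition two_solvable_mod :: "'v set \<Rightarrow> ('x \<Rightarrow> 'v set) \<Rightarrow> nat \<Rightarrow> bool" where
  "two_solvable_mod V f p \<longleftrightarrow> (\<exists>red. two_solving_coloring V f p red)"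

definition two_solvable :: "'v set \<Rightarrow> ('x \<Rightarrow> 'v set) \<Rightarrow> bool" where
  "two_solvable V f \<longleftrightarrow> (\<exists>p. prime p \<and> two_solvable_mod V f p)"

definition avec :: "('x::finite \<Rightarrow> 'v set) \<Rightarrow> 'v \<Rightarrow> real^'x" where
  "avec f v = (\<chi> i. if v \<in> f i then 1 else 0)"

definition polytope_H :: "'v set \<Rightarrow> ('x::finite \<Rightarrow> 'v set) \<Rightarrow> (real^'x) set" where
  "polytope_H V f = convex hull (avec f ` V)"

definition ehrhart_H :: "'v set \<Rightarrow> ('x::finite \<Rightarrow> 'v set) \<Rightarrow> ('x,'k::field) spoly set" where
  "ehrhart_H V f = ehrhart_ring (polytope_H V f)"

definition polytopal_H :: "'v set \<Rightarrow> ('x::finite \<Rightarrow> 'v set) \<Rightarrow> ('x,'k::field) spoly set" where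
  "polytopal_H V f = polytopal_ring (polytope_H V f)"

end

theory Submission
  imports Defs
begin

lemma lookup_expo_fun: "Poly_Mapping.lookup (expo a t) = (\<lambda>j. case j of None \<Rightarrow> t | Some i \<Rightarrow> a i)"
  unfolding expo_def by (rule lookup_Abs_poly_mapping) simp

lemma lookup_expo: "Poly_Mapping.lookup (expo a t) None = t" "Poly_Mapping.lookup (expo a t) (Some i) = a i"
  by (simp_all add: lookup_expo_fun)

lemma expo_add: "expo a t + expo b s = expo (\<lambda>i. a i + b i) (t + s)"
  by (rule poly_mapping_eqI) (auto simp: lookup_add lookup_expo_fun split: option.splits)

lemma expo_inj: "expo a t = expo b s \<Longrightarrow> a = b \<and> t = s"
  by (metis ext lookup_expo)

lemma expo_zero: "expo (\<lambda>i. 0) 0 = 0"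
  by (rule poly_mapping_eqI) (auto simp: lookup_expo_fun split: option.splits)


lemma lattice_pt:
  fixes f :: "'x::finite \<Rightarrow> 'v set"
  assumes fin: "finite V" and a: "rvec a \<in> polytope_H V f"
  shows "\<exists>v\<in>V. \<forall>i. a i = (if v \<in> f i then 1 else 0)"
proof -
  let ?S = "avec f ` V"
  have "finite ?S" using fin by simp
  then obtain u where u0: "\<forall>x\<in>?S. 0 \<le> u x" and u1: "sum u ?S = 1"
    and us: "(\<Sum>x\<in>?S. u x *\<^sub>R x) = rvec a"
    using a unfolding polytope_H_def convex_hull_finite[OF \<open>finite ?S\<close>] by blast
  obtain x where xS: "x \<in> ?S" and ux: "u x > 0"
  proof -
    have "\<exists>x\<in>?S. u x \<noteq> 0" using u1 by (metis sum.neutral zero_neq_one)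
    thus ?thesis using that u0 by force
  qed
  then obtain v where v: "v \<in> V" "x = avec f v" by blast
  have comp: "real (a i) = (\<Sum>y\<in>?S. u y * y $ i)" for i
  proof -
    have "real (a i) = rvec a $ i" by (simp add: rvec_def)
    also have "\<dots> = (\<Sum>y\<in>?S. u y * y $ i)" unfolding us[symmetric] by (simp add: sum_component)
    finally show ?thesis .
  qed
  have y01: "y $ i = 0 \<or> y $ i = 1" if "y \<in> ?S" for y i using that by (auto simp: avec_def)
  have "a i = (if v \<in> f i then 1 else 0)" for i
  proof -
    have le1: "real (a i) \<le> 1"
    proof -
      have "(\<Sum>y\<in>?S. u y * y $ i) \<le> (\<Sum>y\<in>?S. u y)"
        apply (rule sum_mono) using y01 u0 by (metis mult.right_neutral mult_zero_right order_refl)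
      thus ?thesis using comp u1 by simp
    qed
    have "a i = 0 \<or> a i = 1" using le1 by linarith
    moreover
    { assume "a i = 0"
      hence "(\<Sum>y\<in>?S. u y * y $ i) = 0" using comp[of i] by simp
      hence "\<forall>y\<in>?S. u y * y $ i = 0"
        using sum_nonneg_eq_0_iff[OF \<open>finite ?S\<close>] u0 y01
        by (metis (no_types, lifting) mult_nonneg_nonneg order_refl zero_le_one)
      hence "x $ i = 0" using xS ux by auto
      hence "v \<notin> f i" using v by (simp add: avec_def split: if_splits)
      hence ?thesis using \<open>a i = 0\<close> by simp }
    moreover
    { assume "a i = 1"
      hence "(\<Sum>y\<in>?S. u y * (1 - y $ i)) = 0" using comp[of i] u1
        by (simp add: algebra_simps sum_subtractf)
      hence "\<forall>y\<in>?S. u y * (1 - y $ i) = 0"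
        using sum_nonneg_eq_0_iff[OF \<open>finite ?S\<close>] u0 y01
        by (smt (verit, ccfv_SIG) mult_nonneg_nonneg)
      hence "x $ i = 1" using xS ux by auto
      hence "v \<in> f i" using v by (simp add: avec_def split: if_splits)
      hence ?thesis using \<open>a i = 1\<close> by simp }
    ultimately show ?thesis by blast
  qed
  thus ?thesis using v by blast
qed

definition Mset :: "'v set \<Rightarrow> ('x::finite \<Rightarrow> 'v set) \<Rightarrow> ('x option \<Rightarrow>\<^sub>0 nat) set" where
  "Mset V f = {expo (\<lambda>i. \<Sum>v\<in>f i. n v) (\<Sum>v\<in>V. n v) | n. True}"

lemma kalg_keys:
  fixes f :: "'x::finite \<Rightarrow> 'v set"
  assumes lh: "labeled_hypergraph V f"
    and q: "q \<in> kalg {monomial a 1 | a. rvec a \<in> polytope_H V f}"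
  shows "Poly_Mapping.keys (q :: ('x,'k::field) spoly) \<subseteq> Mset V f"
  using q
proof induction
  case kalg_one
  have "expo (\<lambda>i. \<Sum>v\<in>f i. (\<lambda>_. 0::nat) v) (\<Sum>v\<in>V. (\<lambda>_. 0) v) = 0"
    by (simp add: expo_zero)
  moreover have "Poly_Mapping.keys (1::('x,'k) spoly) = {0}" by simp
  ultimately show ?case unfolding Mset_def by (auto intro!: exI[of _ "\<lambda>_. 0"])
next
  case (kalg_gen g)
  then obtain a where g: "g = monomial a 1" and a: "rvec a \<in> polytope_H V f" by blast
  have fin: "finite V" and sub: "\<And>i. f i \<subseteq> V" using lh by (auto simp: labeled_hypergraph_def)
  obtain v where v: "v \<in> V" "\<forall>i. a i = (if v \<in> f i then 1 else 0)"
    using lattice_pt[OF fin a] by blast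
  let ?n = "\<lambda>w. if w = v then 1 else (0::nat)"
  have fi: "finite (f i)" for i using sub fin finite_subset by blast
  have "(\<Sum>w\<in>f i. ?n w) = a i" for i using v(2) fi[of i]
    by (simp add: sum.delta)
  moreover have "(\<Sum>w\<in>V. ?n w) = 1" using v(1) fin by (simp add: sum.delta)
  ultimately have "expo a 1 = expo (\<lambda>i. \<Sum>w\<in>f i. ?n w) (\<Sum>w\<in>V. ?n w)" by simp
  then show ?case unfolding g monomial_def Mset_def by auto
next
  case (kalg_add p q)
  then show ?case using keys_add[of p q] by (meson le_sup_iff order_trans)
next
  case (kalg_mult p q)
  have "Poly_Mapping.keys (p * q) \<subseteq> {a + b | a b. a \<in> Poly_Mapping.keys p \<and> b \<in> Poly_Mapping.keys q}" by (rule keys_mult)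
  moreover have "a + b \<in> Mset V f" if aM: "a \<in> Mset V f" and bM: "b \<in> Mset V f" for a b
  proof -
    obtain n where n: "a = expo (\<lambda>i. \<Sum>v\<in>f i. n v) (\<Sum>v\<in>V. n v)" using aM unfolding Mset_def by blast
    obtain m where m: "b = expo (\<lambda>i. \<Sum>v\<in>f i. m v) (\<Sum>v\<in>V. m v)" using bM unfolding Mset_def by blast
    have "a + b = expo (\<lambda>i. \<Sum>v\<in>f i. n v + m v) (\<Sum>v\<in>V. n v + m v)"
      unfolding n m expo_add by (simp add: sum.distrib)
    thus ?thesis unfolding Mset_def by blast
  qed
  ultimately show ?case using kalg_mult.IH
  proof -
    assume A: "Poly_Mapping.keys (p * q) \<subseteq> {a + b | a b. a \<in> Poly_Mapping.keys p \<and> b \<in> Poly_Mapping.keys q}"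
      and B: "\<And>a b. a \<in> Mset V f \<Longrightarrow> b \<in> Mset V f \<Longrightarrow> a + b \<in> Mset V f"
    show ?thesis
    proof
      fix x assume "x \<in> Poly_Mapping.keys (p * q)"
      then obtain a b where "x = a + b" "a \<in> Poly_Mapping.keys p" "b \<in> Poly_Mapping.keys q" using A by blast
      thus "x \<in> Mset V f" using B kalg_mult.IH by blast
    qed
  qed
next
  case (kalg_smult p c)
  have "Poly_Mapping.keys (Poly_Mapping.single 0 c * p) \<subseteq> {a + b | a b. a \<in> Poly_Mapping.keys (Poly_Mapping.single 0 c) \<and> b \<in> Poly_Mapping.keys p}" by (rule keys_mult)
  also have "\<dots> \<subseteq> Poly_Mapping.keys p"
  proof
    fix x assume "x \<in> {a + b | a b. a \<in> Poly_Mapping.keys (Poly_Mapping.single 0 c) \<and> b \<in> Poly_Mapping.keys p}"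
    then obtain a b where "x = a + b" "a \<in> Poly_Mapping.keys (Poly_Mapping.single (0::'x option \<Rightarrow>\<^sub>0 nat) c)" "b \<in> Poly_Mapping.keys p" by blast
    moreover have "a = 0" using calculation(2) by (simp split: if_splits)
    ultimately show "x \<in> Poly_Mapping.keys p" by simp
  qed
  finally show ?case using kalg_smult.IH by blast
qed


lemma sum_eps:
  assumes "finite E"
  shows "(\<Sum>v\<in>E. (if red v then 1 else -1 :: real)) = real_of_int (num_red red E - num_blue red E)"
proof -
  have "(\<Sum>v\<in>E. (if red v then 1 else -1 :: real)) = (\<Sum>v\<in>{v\<in>E. red v}. 1) + (\<Sum>v\<in>{v\<in>E. \<not> red v}. -1)"
    using assms by (simp add: sum.If_cases Int_def)
  thus ?thesis by (simp add: num_red_def num_blue_def)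
qed

theorem theorem4p6:
  fixes V :: "'v set" and f :: "'x::finite \<Rightarrow> 'v set" and p :: nat and red :: "'v \<Rightarrow> bool"
  assumes "labeled_hypergraph V f"
    and "separated V f"
    and "skel_connected V f"
    and "prime p"
    and "two_solving_coloring V f p red"
    and "\<exists>E. simple_edge f E \<and> num_red red E \<noteq> num_blue red E"
  shows "(ehrhart_H V f :: ('x,'k::field) spoly set) \<noteq> polytopal_H V f"
proof
  assume eq: "(ehrhart_H V f :: ('x,'k::field) spoly set) = polytopal_H V f"
  have fin: "finite V" and sub: "\<And>i. f i \<subseteq> V" using assms(1) by (auto simp: labeled_hypergraph_def)
  have fi: "finite (f i)" for i using sub fin finite_subset by blast
  have p2: "p \<ge> 2" using assms(4) prime_ge_2_nat by blast
  hence pp: "real p \<ge> 2" by simp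
  have adj: "\<And>u w. skel_adj f u w \<Longrightarrow> red u \<noteq> red w"
    and divis: "\<And>E. E \<in> insert V (hedges f) \<Longrightarrow> (num_red red E - num_blue red E) mod int p = 0"
    using assms(5) unfolding two_solving_coloring_def by blast+
  obtain E where sE: "simple_edge f E" and dE: "num_red red E \<noteq> num_blue red E" using assms(6) by blast
  obtain i0 where Ei0: "E = f i0" and Ene: "E \<noteq> {}" using sE unfolding simple_edge_def hedges_def by blast
  define eps where "eps v = (if red v then 1 else -1 :: real)" for v
  define mu where "mu v = 1 + eps v / real p" for v
  define D where "D E = num_red red E - num_blue red E" for E
  have mu_pos: "mu v > 0" for v
  proof -
    have "1 / real p < 1" using pp by simp
    moreover have "eps v / real p \<ge> - (1 / real p)" using pp by (simp add: eps_def)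
    ultimately show ?thesis unfolding mu_def by linarith
  qed
  have sum_mu: "(\<Sum>v\<in>F. mu v) = real_of_int (int (card F) + D F div int p)"
    if "F \<in> insert V (hedges f)" "finite F" for F
  proof -
    have m0: "D F mod int p = 0" using divis[OF that(1)] unfolding D_def .
    have dF: "D F = int p * (D F div int p)" using mult_div_mod_eq[of "int p" "D F"] m0 by simp
    have r: "real_of_int (D F) = real p * real_of_int (D F div int p)"
      using arg_cong[OF dF, of real_of_int] by simp
    have r2: "real_of_int (D F) / real p = real_of_int (D F div int p)"
      unfolding r using p2 by simp
    have "(\<Sum>v\<in>F. mu v) = real (card F) + (\<Sum>v\<in>F. eps v) / real p"
      unfolding mu_def by (simp add: sum.distrib sum_divide_distrib)
    also have "(\<Sum>v\<in>F. eps v) = real_of_int (D F)" unfolding eps_def D_def by (rule sum_eps[OF that(2)])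
    finally show ?thesis unfolding r2 by simp
  qed
  have fih: "f i \<in> insert V (hedges f)" if "f i \<noteq> {}" for i using that unfolding hedges_def by auto
  define z where "z i = nat (int (card (f i)) + D (f i) div int p)" for i
  define t where "t = nat (int (card V) + D V div int p)"
  have z_eq: "real (z i) = (\<Sum>v\<in>f i. mu v)" for i
  proof (cases "f i = {}")
    case True thus ?thesis by (simp add: z_def D_def num_red_def num_blue_def)
  next
    case False
    have "(\<Sum>v\<in>f i. mu v) \<ge> 0" using mu_pos by (simp add: sum_nonneg less_imp_le)
    thus ?thesis using sum_mu[OF fih[OF False] fi] unfolding z_def by simp
  qed
  have Vne: "V \<noteq> {}" using Ene sub Ei0 by blast
  have sV: "(\<Sum>v\<in>V. mu v) > 0" using sum_pos[OF fin Vne] mu_pos by blast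
  have t_eq: "real t = (\<Sum>v\<in>V. mu v)"
    using sum_mu[of V] fin sV unfolding t_def by simp
  have tpos: "real t > 0" using t_eq sV by simp
  define q where "q = (\<Sum>v\<in>V. (mu v / real t) *\<^sub>R avec f v)"
  have q_in: "q \<in> polytope_H V f"
    unfolding q_def polytope_H_def
  proof (rule convex_sum[OF fin convex_convex_hull])
    show "(\<Sum>v\<in>V. mu v / real t) = 1" using tpos t_eq by (simp add: sum_divide_distrib[symmetric])
    show "\<And>v. v \<in> V \<Longrightarrow> 0 \<le> mu v / real t" using mu_pos tpos by (simp add: less_imp_le)
    show "\<And>v. v \<in> V \<Longrightarrow> avec f v \<in> convex hull avec f ` V" by (simp add: hull_inc)
  qed
  have "real t *\<^sub>R q = (\<Sum>v\<in>V. mu v *\<^sub>R avec f v)"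
    unfolding q_def scaleR_sum_right using tpos by simp
  also have "\<dots> = rvec z"
  proof (subst vec_eq_iff, intro allI)
    fix i
    have "(\<Sum>v\<in>V. mu v *\<^sub>R avec f v) $ i = (\<Sum>v\<in>V. mu v * (avec f v $ i))"
      by (simp add: sum_component)
    also have "\<dots> = (\<Sum>v\<in>V. if v \<in> f i then mu v else 0)"
      by (rule sum.cong) (auto simp: avec_def)
    also have "\<dots> = (\<Sum>v\<in>V \<inter> f i. mu v)" by (simp add: sum.inter_restrict[OF fin])
    also have "V \<inter> f i = f i" using sub by blast
    finally show "(\<Sum>v\<in>V. mu v *\<^sub>R avec f v) $ i = rvec z $ i" using z_eq by (simp add: rvec_def)
  qed
  finally have "rvec z \<in> (\<lambda>p. real t *\<^sub>R p) ` polytope_H V f" using q_in by (metis image_eqI)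
  hence "(monomial z t :: ('x,'k) spoly) \<in> ehrhart_H V f"
    unfolding ehrhart_H_def ehrhart_ring_def by (blast intro: kspan.kspan_gen)
  hence "(monomial z t :: ('x,'k) spoly) \<in> kalg {monomial a 1 | a. rvec a \<in> polytope_H V f}"
    using eq unfolding polytopal_H_def polytopal_ring_def by simp
  from kalg_keys[OF assms(1) this] have "expo z t \<in> Mset V f" by (simp add: monomial_def)
  then obtain n where "expo z t = expo (\<lambda>i. \<Sum>v\<in>f i. n v) (\<Sum>v\<in>V. n v)" unfolding Mset_def by blast
  hence "z = (\<lambda>i. \<Sum>v\<in>f i. n v)" using expo_inj by blast
  hence zn: "z i = (\<Sum>v\<in>f i. n v)" for i by simp
  define d where "d v = real (n v) - mu v" for v
  have sd: "(\<Sum>v\<in>f i. d v) = 0" for i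
    unfolding d_def sum_subtractf z_eq[symmetric] zn by simp
  define g where "g v = eps v * d v" for v
  have gadj: "g u = g w" if "skel_adj f u w" for u w
  proof -
    from that obtain i where fi': "f i = {u, w}" and uw: "u \<noteq> w"
      unfolding skel_adj_def hedges_def by auto
    have "d u + d w = 0" using sd[of i] fi' uw by simp
    hence du: "d u = - d w" by linarith
    have "eps u = - eps w" using adj[OF that] by (simp add: eps_def)
    thus ?thesis unfolding g_def du by simp
  qed
  have gconn: "g u = g w" if "(u, w) \<in> {(a, b). skel_adj f a b}\<^sup>*" for u w
    using that by (induction rule: rtrancl_induct) (auto dest: gadj)
  obtain v0 where v0: "v0 \<in> E" using Ene by blast
  have "d v = eps v * g v0" if "v \<in> E" for v
  proof -
    have "v \<in> V" "v0 \<in> V" using that v0 sub Ei0 by auto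
    hence "(v, v0) \<in> {(a, b). skel_adj f a b}\<^sup>*" using assms(3) unfolding skel_connected_def by blast
    hence "g v = g v0" by (rule gconn)
    moreover have "eps v * eps v = 1" by (simp add: eps_def)
    ultimately show ?thesis unfolding g_def by (metis mult.assoc mult_1)
  qed
  hence "(\<Sum>v\<in>E. d v) = g v0 * (\<Sum>v\<in>E. eps v)" by (simp add: sum_distrib_left mult.commute)
  also have "(\<Sum>v\<in>E. eps v) = real_of_int (D E)" unfolding eps_def D_def
    by (rule sum_eps) (simp add: Ei0 fi)
  finally have "g v0 * real_of_int (D E) = 0" using sd[of i0] Ei0 by simp
  moreover have "real_of_int (D E) \<noteq> 0" using dE by (simp add: D_def)
  ultimately have "g v0 = 0" by simp
  hence "d v0 = 0" unfolding g_def by (simp add: eps_def split: if_splits)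
  hence nv: "real (n v0) = 1 + eps v0 / real p" unfolding d_def mu_def by simp
  have h1: "0 < 1 / real p" "1 / real p < 1" using pp by simp_all
  show False
  proof (cases "red v0")
    case True
    hence "real (n v0) = 1 + 1 / real p" using nv by (simp add: eps_def)
    hence "1 < real (n v0)" "real (n v0) < 2" using h1 by linarith+
    hence "1 < n v0" "n v0 < 2" by simp_all
    thus False by linarith
  next
    case False
    hence "real (n v0) = 1 - 1 / real p" using nv by (simp add: eps_def)
    hence "0 < real (n v0)" "real (n v0) < 1" using h1 by linarith+
    hence "0 < n v0" "n v0 < 1" by simp_all
    thus False by linarith
  qed
qed

end
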